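(* Let $d\ge2$ and $\gamma\ge2d$. The set $$\mathcal V=\{v\in\mathcal R^{(\gamma)}_\infty: v+w\notin\mathcal R^{(\gamma)}_\infty\text{ for every nonzero } w\in f^{(d,\gamma)}\cdot\ell^\infty(\mathbb Z^d,\mathbb Z)\}$$ is a dense $G_\delta$ subset of $\mathcal R^{(\gamma)}_\infty$ (in the product topology).
   Context: $f^{(d,\gamma)}=\gamma-\sum_{i=1}^d(u_i+u_i^{-1})$, acting on $h\in\ell^\infty(\mathbb Z^d,\mathbb Z)$ by $(f^{(d,\gamma)}\cdot h)_{\mathbf n}=\gamma h_{\mathbf n}-\sum_i(h_{\mathbf n+\mathbf e^{(i)}}+h_{\mathbf n-\mathbf e^{(i)}})$. For nonempty $F\subset\mathbb Z^d$, $\mathsf N_F(\mathbf n)=|F\cap\{\mathbf n\pm\mathbf e^{(i)}\}|$. $\mathcal R^{(\gamma)}_\infty=\{v\in\{0,\dots,\gamma-1\}^{\mathbb Z^d}:$ for every finite nonempty $F\subset\mathbb Z^d$ there is $\mathbf n\in F$ with $v_{\mathbf n}\ge\mathsf N_F(\mathbf n)\}$. *)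

theory Defs
  imports "HOL-Analysis.Analysis"
begin

text \<open>Lattice points of Z^d are functions 'n => int, where 'n is a finite index
type with CARD('n) = d. Configurations are functions (('n => int) => int).\<close>

definition shift_plus :: "('n \<Rightarrow> int) \<Rightarrow> 'n \<Rightarrow> ('n \<Rightarrow> int)" where
  "shift_plus p i = p(i := p i + 1)"

definition shift_minus :: "('n \<Rightarrow> int) \<Rightarrow> 'n \<Rightarrow> ('n \<Rightarrow> int)" where
  "shift_minus p i = p(i := p i - 1)"

text \<open>The action of f^(d,gamma) = gamma - sum_i (u_i + u_i^{-1}).\<close>
definition f_act :: "int \<Rightarrow> (('n::finite \<Rightarrow> int) \<Rightarrow> int) \<Rightarrow> (('n \<Rightarrow> int) \<Rightarrow> int)" where
  "f_act \<gamma> h = (\<lambda>p. \<gamma> * h p - (\<Sum>i\<in>(UNIV::'n set). h (shift_plus p i) + h (shift_minus p i)))"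

definition linf_int :: "(('n \<Rightarrow> int) \<Rightarrow> int) set" where
  "linf_int = {h. \<exists>B. \<forall>p. \<bar>h p\<bar> \<le> B}"

definition nbr_count :: "('n \<Rightarrow> int) set \<Rightarrow> ('n \<Rightarrow> int) \<Rightarrow> nat" where
  "nbr_count F p = card (F \<inter> {q. \<exists>i. q = shift_plus p i \<or> q = shift_minus p i})"

definition R_inf :: "int \<Rightarrow> (('n \<Rightarrow> int) \<Rightarrow> int) set" where
  "R_inf \<gamma> = {v. (\<forall>p. 0 \<le> v p \<and> v p \<le> \<gamma> - 1) \<and>
      (\<forall>F. finite F \<and> F \<noteq> {} \<longrightarrow> (\<exists>p\<in>F. v p \<ge> int (nbr_count F p)))}"

text \<open>Product topology on Z^(Z^d) (discrete factors); R_inf carries the subspace topology,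
which coincides with the product topology on {0..gamma-1}^(Z^d) restricted to R_inf.\<close>
definition config_top :: "(('n \<Rightarrow> int) \<Rightarrow> int) topology" where
  "config_top = product_topology (\<lambda>_. discrete_topology (UNIV::int set)) UNIV"

definition V_set :: "int \<Rightarrow> (('n::finite \<Rightarrow> int) \<Rightarrow> int) set" where
  "V_set \<gamma> = {v \<in> R_inf \<gamma>. \<forall>w \<in> f_act \<gamma> ` linf_int. w \<noteq> (\<lambda>_. 0) \<longrightarrow> (\<lambda>p. v p + w p) \<notin> R_inf \<gamma>}"

end

theory Submission
  imports Defs
begin


definition Nb :: "('n \<Rightarrow> int) \<Rightarrow> ('n \<Rightarrow> int) set" where
  "Nb p = range (shift_plus p) \<union> range (shift_minus p)"

lemma Nb_eq: "{q. \<exists>i. q = shift_plus p i \<or> q = shift_minus p i} = Nb p"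
  unfolding Nb_def by auto

lemma nbr_count_Nb: "nbr_count F p = card (F \<inter> Nb p)"
  unfolding nbr_count_def Nb_eq ..

lemma inj_shift_plus: "inj (shift_plus p)"
  unfolding inj_def shift_plus_def by (metis fun_upd_apply less_add_one order_less_irrefl)

lemma inj_shift_minus: "inj (shift_minus p)"
  unfolding inj_def shift_minus_def by (metis fun_upd_apply diff_less_eq less_add_one order_less_irrefl)

lemma shift_disj: "shift_plus p i \<noteq> shift_minus p j"
proof
  assume "shift_plus p i = shift_minus p j"
  hence "shift_plus p i i = shift_minus p j i" by simp
  thus False unfolding shift_plus_def shift_minus_def by (cases "i = j") auto
qed

lemma finite_Nb: "finite (Nb (p::'n::finite \<Rightarrow> int))"
  unfolding Nb_def by simp

lemma card_Nb: "card (Nb (p::'n::finite \<Rightarrow> int)) = 2 * CARD('n)"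
proof -
  have "card (Nb p) = card (range (shift_plus p)) + card (range (shift_minus p))"
    unfolding Nb_def by (rule card_Un_disjoint) (auto simp: shift_disj)
  also have "\<dots> = 2 * CARD('n)"
    using card_image[OF inj_shift_plus[of p]] card_image[OF inj_shift_minus[of p]] by simp
  finally show ?thesis .
qed

lemma sum_Nb: "(\<Sum>i\<in>(UNIV::'n::finite set). g (shift_plus p i) + g (shift_minus p i)) = sum g (Nb p)"
proof -
  have "sum g (Nb p) = sum g (range (shift_plus p)) + sum g (range (shift_minus p))"
    unfolding Nb_def by (rule sum.union_disjoint) (auto simp: shift_disj)
  also have "\<dots> = (\<Sum>i\<in>UNIV. g (shift_plus p i)) + (\<Sum>i\<in>UNIV. g (shift_minus p i))"
    by (simp add: sum.reindex[OF inj_shift_plus] sum.reindex[OF inj_shift_minus])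
  finally show ?thesis by (simp add: sum.distrib)
qed

lemma f_act_Nb: "f_act \<gamma> h p = \<gamma> * h p - sum h (Nb p)"
  unfolding f_act_def sum_Nb ..

lemma argmax:
  fixes h :: "('n::finite \<Rightarrow> int) \<Rightarrow> int"
  assumes "\<And>q. h q \<le> M" "h p = M"
  shows "f_act \<gamma> h p \<ge> (\<gamma> - 2 * int CARD('n)) * M + (2 * int CARD('n) - int (card ({q. h q = M} \<inter> Nb p)))"
proof -
  let ?S = "{q. h q = M}"
  have fin: "finite (Nb p)" by (rule finite_Nb)
  have c: "card (Nb p \<inter> ?S) + card (Nb p - ?S) = 2 * CARD('n)"
    using card_Nb[of p] card_Int_Diff[OF fin, of ?S] by simp
  have "sum h (Nb p) = sum h (Nb p \<inter> ?S) + sum h (Nb p - ?S)"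
    using sum.Int_Diff[OF fin] by blast
  also have "sum h (Nb p \<inter> ?S) = int (card (Nb p \<inter> ?S)) * M" by simp
  also have "sum h (Nb p - ?S) \<le> (\<Sum>q\<in>Nb p - ?S. M - 1)"
    by (rule sum_mono) (use assms(1) in \<open>force simp: order_le_less\<close>)
  also have "\<dots> = int (card (Nb p - ?S)) * (M - 1)" by simp
  finally have "sum h (Nb p) \<le> int (card (Nb p \<inter> ?S)) * M + int (card (Nb p - ?S)) * (M - 1)" by simp
  moreover have "int (card (Nb p \<inter> ?S)) + int (card (Nb p - ?S)) = 2 * int CARD('n)"
    using c by linarith
  moreover have "card (?S \<inter> Nb p) = card (Nb p \<inter> ?S)" by (simp add: Int_commute)
  moreover have "int (card (Nb p \<inter> ?S)) * M + int (card (Nb p - ?S)) * (M - 1)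
      = (int (card (Nb p \<inter> ?S)) + int (card (Nb p - ?S))) * M - int (card (Nb p - ?S))"
    by (simp add: algebra_simps)
  ultimately have "sum h (Nb p) \<le> 2 * int CARD('n) * M - int (card (Nb p - ?S))"
    and "int (card (Nb p - ?S)) = 2 * int CARD('n) - int (card (?S \<inter> Nb p))" by simp_all
  then show ?thesis unfolding f_act_Nb using assms(2)
    by (simp add: algebra_simps)
qed

lemma argmin:
  fixes h :: "('n::finite \<Rightarrow> int) \<Rightarrow> int"
  assumes "\<And>q. m \<le> h q" "h p = m"
  shows "f_act \<gamma> h p \<le> (\<gamma> - 2 * int CARD('n)) * m - (2 * int CARD('n) - int (card ({q. h q = m} \<inter> Nb p)))"
proof -
  have "f_act \<gamma> (\<lambda>q. - h q) p \<ge> (\<gamma> - 2 * int CARD('n)) * (-m) + (2 * int CARD('n) - int (card ({q. - h q = -m} \<inter> Nb p)))"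
    by (rule argmax) (use assms in auto)
  moreover have "f_act \<gamma> (\<lambda>q. - h q) p = - f_act \<gamma> h p"
    unfolding f_act_Nb by (simp add: sum_negf)
  ultimately show ?thesis by simp
qed



definition cube :: "int \<Rightarrow> ('n \<Rightarrow> int) set" where
  "cube r = {p. \<forall>i. \<bar>p i\<bar> \<le> r}"

lemma finite_box: "finite (cube r :: ('n::finite \<Rightarrow> int) set)"
proof -
  have "cube r \<subseteq> PiE UNIV (\<lambda>_. {-r..r})"
  proof
    fix x assume "x \<in> cube r"
    then have a: "\<bar>x i\<bar> \<le> r" for i unfolding cube_def by blast
    have "x i \<in> {-r..r}" for i using a[of i] by (simp add: abs_le_iff)
    then show "x \<in> PiE UNIV (\<lambda>_. {-r..r})" by auto
  qed
  moreover have "finite (PiE (UNIV::'n set) (\<lambda>_. {-r..r}))" by (rule finite_PiE) auto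
  ultimately show ?thesis by (rule finite_subset)
qed

lemma box_mono: "r \<le> s \<Longrightarrow> cube r \<subseteq> cube s"
  unfolding cube_def using order_trans by blast

lemma finite_in_box: "finite (J :: ('n::finite \<Rightarrow> int) set) \<Longrightarrow> \<exists>r. J \<subseteq> cube r"
proof (induction J rule: finite_induct)
  case empty then show ?case by simp
next
  case (insert p J)
  then obtain r where r: "J \<subseteq> cube r" by blast
  have "p \<in> cube (\<Sum>i\<in>UNIV. \<bar>p i\<bar>)" unfolding cube_def
    by (auto intro: member_le_sum)
  then show ?case using r box_mono[of r "max r (\<Sum>i\<in>UNIV. \<bar>p i\<bar>)"]
    box_mono[of "\<Sum>i\<in>UNIV. \<bar>p i\<bar>" "max r (\<Sum>i\<in>UNIV. \<bar>p i\<bar>)"] by auto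
qed

lemma R_infD:
  assumes "v \<in> R_inf \<gamma>"
  shows "\<And>p. 0 \<le> v p" "\<And>p. v p \<le> \<gamma> - 1"
    and "\<And>F. finite F \<Longrightarrow> F \<noteq> {} \<Longrightarrow> \<exists>p\<in>F. v p \<ge> int (card (F \<inter> Nb p))"
  using assms unfolding R_inf_def nbr_count_Nb by auto

lemma R_infI:
  assumes "\<And>p. 0 \<le> v p" "\<And>p. v p \<le> \<gamma> - 1"
    and "\<And>F. finite F \<Longrightarrow> F \<noteq> {} \<Longrightarrow> \<exists>p\<in>F. v p \<ge> int (card (F \<inter> Nb p))"
  shows "v \<in> R_inf \<gamma>"
  using assms unfolding R_inf_def nbr_count_Nb by auto

lemma no_bad:
  assumes "v \<in> R_inf \<gamma>" "finite S" "S \<noteq> {}" "\<And>p. p \<in> S \<Longrightarrow> v p < int (card (S \<inter> Nb p))"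
  shows False
  using R_infD(3)[OF assms(1-3)] assms(4) by force

lemma card_le_Nb: "card (S \<inter> Nb (p::'n::finite \<Rightarrow> int)) \<le> 2 * CARD('n)"
  by (metis card_Nb card_mono finite_Nb inf_le2)

lemma full_Nb: "card (S \<inter> Nb (p::'n::finite \<Rightarrow> int)) \<ge> 2 * CARD('n) \<Longrightarrow> Nb p \<subseteq> S"
  by (metis Int_lower2 card_Nb card_subset_eq finite_Nb inf.absorb_iff2 inf_le1 le_antisym card_le_Nb)

lemma shift_plus_upd: "shift_plus p j = p(j := p j + 1)"
  by (simp add: shift_plus_def)

lemma move1:
  assumes cl: "\<And>q. q \<in> A \<Longrightarrow> q \<notin> cube R \<Longrightarrow> Nb q \<subseteq> A"
    and "p \<in> A" "R < \<bar>p i\<bar>" "j \<noteq> i"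
  shows "p(j := x) \<in> A"
proof -
  have up: "p(j := p j + int n) \<in> A" for n
  proof (induction n)
    case 0 then show ?case using assms(2) by simp
  next
    case (Suc n)
    let ?c = "p(j := p j + int n)"
    have "\<bar>?c i\<bar> > R" using assms(3,4) by simp
    then have "?c \<notin> cube R" unfolding cube_def by (metis (mono_tags, lifting) mem_Collect_eq not_le)
    then have "Nb ?c \<subseteq> A" using cl Suc by blast
    moreover have "shift_plus ?c j \<in> Nb ?c" unfolding Nb_def by blast
    ultimately have "shift_plus ?c j \<in> A" by (rule subsetD)
    moreover have "shift_plus ?c j = p(j := p j + int (Suc n))" unfolding shift_plus_def by (simp add: algebra_simps)
    ultimately show ?case by metis
  qed
  have down: "p(j := p j - int n) \<in> A" for n
  proof (induction n)
    case 0 then show ?case using assms(2) by simp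
  next
    case (Suc n)
    let ?c = "p(j := p j - int n)"
    have "\<bar>?c i\<bar> > R" using assms(3,4) by simp
    then have "?c \<notin> cube R" unfolding cube_def by (metis (mono_tags, lifting) mem_Collect_eq not_le)
    then have "Nb ?c \<subseteq> A" using cl Suc by blast
    moreover have "shift_minus ?c j \<in> Nb ?c" unfolding Nb_def by blast
    ultimately have "shift_minus ?c j \<in> A" by (rule subsetD)
    moreover have "shift_minus ?c j = p(j := p j - int (Suc n))" unfolding shift_minus_def by (simp add: algebra_simps)
    ultimately show ?case by metis
  qed
  show ?thesis
  proof (cases "x \<ge> p j")
    case True
    then have "p j + int (nat (x - p j)) = x" by simp
    then show ?thesis using up[of "nat (x - p j)"] by simp
  next
    case False
    then have "p j - int (nat (p j - x)) = x" by simp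
    then show ?thesis using down[of "nat (p j - x)"] by simp
  qed
qed

lemma moveU:
  assumes cl: "\<And>q. q \<in> A \<Longrightarrow> q \<notin> cube R \<Longrightarrow> Nb q \<subseteq> A"
    and "finite U" "i \<notin> U" "p \<in> A" "R < \<bar>p i\<bar>"
  shows "(\<lambda>j. if j \<in> U then t j else p j) \<in> A"
  using assms(2,3)
proof (induction U rule: finite_induct)
  case empty then show ?case using assms(4) by simp
next
  case (insert j U)
  let ?p1 = "\<lambda>k. if k \<in> U then t k else p k"
  have "?p1 \<in> A" using insert by simp
  moreover have "R < \<bar>?p1 i\<bar>" using insert assms(5) by simp
  ultimately have "?p1(j := t j) \<in> A" using move1[of A R ?p1 i j "t j"] cl insert by blast
  moreover have "?p1(j := t j) = (\<lambda>k. if k \<in> insert j U then t k else p k)" by auto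
  ultimately show ?case by simp
qed

lemma moveAll:
  fixes A :: "('n::finite \<Rightarrow> int) set"
  assumes cl: "\<And>q. q \<in> A \<Longrightarrow> q \<notin> cube R \<Longrightarrow> Nb q \<subseteq> A"
    and "p \<in> A" "R < \<bar>p i\<bar>" "t i = p i"
  shows "t \<in> A"
proof -
  have "(\<lambda>j. if j \<in> UNIV - {i} then t j else p j) \<in> A"
    by (rule moveU[OF cl]) (use assms in auto)
  moreover have "(\<lambda>j. if j \<in> UNIV - {i} then t j else p j) = t" using assms(4) by auto
  ultimately show ?thesis by simp
qed

lemma reach:
  fixes A :: "('n::finite \<Rightarrow> int) set"
  assumes cl: "\<And>q. q \<in> A \<Longrightarrow> q \<notin> cube R \<Longrightarrow> Nb q \<subseteq> A"
    and "p \<in> A" "R < \<bar>p i\<bar>" "R < \<bar>q k\<bar>" "k \<noteq> i"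
  shows "q \<in> A"
proof -
  have e1: "(q(i := p i)) i = p i" by simp
  have h1: "q(i := p i) \<in> A" by (rule moveAll[where t="q(i := p i)", OF cl assms(2,3) e1])
  have h2: "R < \<bar>(q(i := p i)) k\<bar>" using assms(4,5) by simp
  have e2: "q k = (q(i := p i)) k" using assms(5) by simp
  show ?thesis by (rule moveAll[where t=q, OF cl h1 h2 e2])
qed

lemma connected_outside:
  fixes A :: "('n::finite \<Rightarrow> int) set"
  assumes card: "CARD('n) \<ge> 2"
    and cl: "\<And>q. q \<in> A \<Longrightarrow> q \<notin> cube R \<Longrightarrow> Nb q \<subseteq> A"
    and "p \<in> A" "p \<notin> cube R" "q \<notin> cube R"
  shows "q \<in> A"
proof -
  have "\<not> (\<forall>i. \<bar>p i\<bar> \<le> R)" using assms(4) unfolding cube_def by simp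
  then obtain i where i: "R < \<bar>p i\<bar>" by (auto simp: not_le)
  have "\<not> (\<forall>i. \<bar>q i\<bar> \<le> R)" using assms(5) unfolding cube_def by simp
  then obtain k where k: "R < \<bar>q k\<bar>" by (auto simp: not_le)
  have "\<exists>j::'n. j \<noteq> i"
  proof (rule ccontr)
    assume "\<not> ?thesis"
    then have "(UNIV::'n set) = {i}" by auto
    then have "CARD('n) = card {i}" by (simp only:)
    then show False using card by simp
  qed
  then obtain j where j: "j \<noteq> i" by blast
  show ?thesis
  proof (cases "k = i")
    case False show ?thesis by (rule reach[where p=p and i=i and q=q and k=k, OF cl assms(3) i k False])
  next
    case True
    have e: "(p(j := R + 1)) i = p i" using j by simp
    have "p(j := R + 1) \<in> A" by (rule moveAll[where t="p(j := R + 1)", OF cl assms(3) i e])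
    moreover have "R < \<bar>(p(j := R + 1)) j\<bar>" by simp
    moreover have "i \<noteq> j" using j by simp
    ultimately show ?thesis using reach[where q=q and k=k and p="p(j := R + 1)" and i=j, OF cl _ _ k] True by blast
  qed
qed



lemma linf_max: "h \<in> linf_int \<Longrightarrow> \<exists>p. \<forall>q. h q \<le> h p"
proof -
  assume "h \<in> linf_int"
  then obtain B where B: "\<And>p. \<bar>h p\<bar> \<le> B" unfolding linf_int_def by blast
  have fin: "finite (range h)"
    by (rule finite_subset[of _ "{-B..B}"]) (use B in \<open>auto simp: abs_le_iff\<close>, metis minus_le_iff)
  have "Max (range h) \<in> range h" by (rule Max_in[OF fin]) auto
  then obtain p where "h p = Max (range h)" by auto
  moreover have "h q \<le> Max (range h)" for q by (rule Max_ge[OF fin]) auto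
  ultimately show ?thesis by metis
qed

lemma linf_min: "h \<in> linf_int \<Longrightarrow> \<exists>p. \<forall>q. h p \<le> h q"
proof -
  assume "h \<in> linf_int"
  then have "(\<lambda>q. - h q) \<in> linf_int" unfolding linf_int_def by auto
  from linf_max[OF this] show ?thesis by auto
qed

lemma f_act_const: "f_act \<gamma> (\<lambda>_. c) p = (\<gamma> - 2 * int CARD('n)) * c"
  for p :: "'n::finite \<Rightarrow> int"
  unfolding f_act_Nb by (simp add: card_Nb algebra_simps)

lemma V_setI:
  assumes "v \<in> R_inf \<gamma>"
    and "\<And>h. h \<in> linf_int \<Longrightarrow> f_act \<gamma> h \<noteq> (\<lambda>_. 0) \<Longrightarrow> (\<lambda>p. v p + f_act \<gamma> h p) \<in> R_inf \<gamma> \<Longrightarrow> False"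
  shows "v \<in> V_set \<gamma>"
  using assms unfolding V_set_def by blast

lemma design_E:
  fixes v :: "('n::finite \<Rightarrow> int) \<Rightarrow> int" and r :: int
  assumes card: "CARD('n) \<ge> 2" and g: "\<gamma> = 2 * int CARD('n)" and vR: "v \<in> R_inf \<gamma>"
  defines "v' \<equiv> (\<lambda>p. if p \<in> cube r then v p else \<gamma> - 1)"
  shows "v' \<in> V_set \<gamma>"
proof (rule V_setI)
  note vD = R_infD[OF vR]
  show v'R: "v' \<in> R_inf \<gamma>"
  proof (rule R_infI)
    fix p show "0 \<le> v' p" "v' p \<le> \<gamma> - 1" unfolding v'_def using vD(1,2)[of p] g card by auto
  next
    fix F :: "('n \<Rightarrow> int) set" assume "finite F" "F \<noteq> {}"
    from vD(3)[OF this] obtain p where "p \<in> F" "v p \<ge> int (card (F \<inter> Nb p))" by blast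
    moreover have "v' p \<ge> v p" unfolding v'_def using vD(2)[of p] by auto
    ultimately show "\<exists>p\<in>F. int (card (F \<inter> Nb p)) \<le> v' p" by force
  qed
  fix h assume hl: "h \<in> linf_int" and w0: "f_act \<gamma> h \<noteq> (\<lambda>_. 0)"
    and uR: "(\<lambda>p. v' p + f_act \<gamma> h p) \<in> R_inf \<gamma>"
  note uD = R_infD[OF uR]
  obtain pM where pM: "\<And>q. h q \<le> h pM" using linf_max[OF hl] by blast
  obtain pm where pm: "\<And>q. h pm \<le> h q" using linf_min[OF hl] by blast
  define M where "M = h pM"
  define m where "m = h pm"
  define S where "S = {q. h q = M}"
  define T where "T = {q. h q = m}"
  show False
  proof (cases "M = m")
    case True
    then have "h = (\<lambda>_. M)" using pM pm unfolding M_def m_def by (metis antisym)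
    then have "f_act \<gamma> h p = 0" for p using g f_act_const[of \<gamma> M p] by simp
    then have "f_act \<gamma> h = (\<lambda>_. 0)" by (simp add: fun_eq_iff)
    with w0 show False by simp
  next
    case False
    then have mM: "m < M" using pM[of pm] unfolding M_def m_def by simp
    have badS: "v' p < int (card (S \<inter> Nb p))" if "p \<in> S" for p
    proof -
      have "f_act \<gamma> h p \<ge> (\<gamma> - 2 * int CARD('n)) * M + (2 * int CARD('n) - int (card (S \<inter> Nb p)))"
        unfolding S_def by (rule argmax) (use pM that in \<open>auto simp: M_def S_def\<close>)
      then show ?thesis using uD(2)[of p] g by simp
    qed
    have badT: "v' p + f_act \<gamma> h p < int (card (T \<inter> Nb p))" if "p \<in> T" for p
    proof -
      have "f_act \<gamma> h p \<le> (\<gamma> - 2 * int CARD('n)) * m - (2 * int CARD('n) - int (card (T \<inter> Nb p)))"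
        unfolding T_def by (rule argmin) (use pm that in \<open>auto simp: m_def T_def\<close>)
      moreover have "v' p \<le> \<gamma> - 1" unfolding v'_def using vD(2)[of p] by auto
      ultimately show ?thesis using g by simp
    qed
    have pMS: "pM \<in> S" and pmT: "pm \<in> T" unfolding S_def T_def M_def m_def by auto
    show False
    proof (cases "S \<subseteq> cube r")
      case True
      then have "finite S" using finite_box finite_subset by blast
      then show False using no_bad[OF v'R _ _ badS] pMS by blast
    next
      case False
      then obtain p0 where p0: "p0 \<in> S" "p0 \<notin> cube r" by blast
      have cl: "Nb q \<subseteq> S" if "q \<in> S" "q \<notin> cube r" for q
      proof (rule full_Nb)
        have "v' q = \<gamma> - 1" unfolding v'_def using that by simp
        then show "2 * CARD('n) \<le> card (S \<inter> Nb q)" using badS[OF that(1)] g by simp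
      qed
      have "q \<in> S" if "q \<notin> cube r" for q
        by (rule connected_outside[OF card cl p0 that])
      then have "T \<subseteq> cube r" using mM unfolding S_def T_def by auto
      then have "finite T" using finite_box finite_subset by blast
      then show False using no_bad[OF uR _ _ badT] pmT by blast
    qed
  qed
qed



lemma Nb_cases: "q \<in> Nb p \<Longrightarrow> \<exists>i. q = p(i := p i + 1) \<or> q = p(i := p i - 1)"
  unfolding Nb_def shift_plus_def shift_minus_def by auto

lemma sum_upd: "(\<Sum>j\<in>(UNIV::'n::finite set). (p(i:=x)) j :: int) = (\<Sum>j\<in>UNIV. p j) - p i + x"
proof -
  have "(\<Sum>j\<in>UNIV. (p(i:=x)) j) = (p(i:=x)) i + (\<Sum>j\<in>UNIV - {i}. (p(i:=x)) j)"
    by (rule sum.remove) auto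
  also have "(\<Sum>j\<in>UNIV - {i}. (p(i:=x)) j) = (\<Sum>j\<in>UNIV - {i}. p j)"
    by (rule sum.cong) auto
  also have "(\<Sum>j\<in>UNIV. p j) = p i + (\<Sum>j\<in>UNIV - {i}. p j)"
    by (rule sum.remove) auto
  ultimately show ?thesis by simp
qed

lemma nb_parity: "q \<in> Nb (p::'n::finite \<Rightarrow> int) \<Longrightarrow> odd (\<Sum>j\<in>UNIV. q j) \<longleftrightarrow> even (\<Sum>j\<in>UNIV. p j)"
proof -
  assume "q \<in> Nb p"
  then obtain i where "q = p(i := p i + 1) \<or> q = p(i := p i - 1)" using Nb_cases by blast
  then have "(\<Sum>j\<in>UNIV. q j) = (\<Sum>j\<in>UNIV. p j) + 1 \<or> (\<Sum>j\<in>UNIV. q j) = (\<Sum>j\<in>UNIV. p j) - 1"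
    using sum_upd[of p i] by auto
  then show ?thesis by auto
qed

lemma nb_abs: "q \<in> Nb p \<Longrightarrow> \<bar>q j\<bar> \<ge> \<bar>p j\<bar> - 1"
proof -
  assume "q \<in> Nb p"
  then obtain i where "q = p(i := p i + 1) \<or> q = p(i := p i - 1)" using Nb_cases by blast
  then show ?thesis by (cases "i = j") auto
qed

definition Zs :: "int \<Rightarrow> ('n::finite \<Rightarrow> int) set" where
  "Zs r = {p. (\<exists>i. r + 2 \<le> \<bar>p i\<bar>) \<and> odd (\<Sum>i\<in>UNIV. p i)}"

lemma Zs_not_cube: "p \<in> Zs r \<Longrightarrow> p \<notin> cube r"
  unfolding Zs_def cube_def by (auto simp: not_le) (metis add_le_same_cancel1 le_less_trans not_le order_refl zero_less_numeral)

lemma Zs_nb: assumes "p \<in> Zs r" "q \<in> Nb p" shows "q \<notin> cube r" "q \<notin> Zs r"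
proof -
  obtain i where i: "r + 2 \<le> \<bar>p i\<bar>" and o: "odd (\<Sum>i\<in>UNIV. p i)" using assms(1) unfolding Zs_def by blast
  have "\<bar>q i\<bar> \<ge> \<bar>p i\<bar> - 1" by (rule nb_abs[OF assms(2)])
  with i have "\<bar>q i\<bar> > r" by simp
  then show "q \<notin> cube r" unfolding cube_def by (auto simp: not_le)
  have "even (\<Sum>i\<in>UNIV. q i)" using nb_parity[OF assms(2)] o by blast
  then show "q \<notin> Zs r" unfolding Zs_def by blast
qed

lemma far_nb: assumes "p \<notin> cube (r + 2)" "even (\<Sum>i\<in>UNIV. p i)" "q \<in> Nb p"
  shows "q \<in> Zs r"
proof -
  have "\<not> (\<forall>i. \<bar>p i\<bar> \<le> r + 2)" using assms(1) unfolding cube_def by simp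
  then obtain i where i: "r + 2 < \<bar>p i\<bar>" by (auto simp: not_le)
  have "\<bar>q i\<bar> \<ge> \<bar>p i\<bar> - 1" by (rule nb_abs[OF assms(3)])
  with i have "r + 2 \<le> \<bar>q i\<bar>" by simp
  moreover have "odd (\<Sum>i\<in>UNIV. q i)" using nb_parity[OF assms(3)] assms(2) by blast
  ultimately show ?thesis unfolding Zs_def by blast
qed

lemma card_le_Nb_int: "int (card (S \<inter> Nb (p::'n::finite \<Rightarrow> int))) \<le> 2 * int CARD('n)"
  using card_le_Nb[of S p] by linarith

lemma design_C:
  fixes v :: "('n::finite \<Rightarrow> int) \<Rightarrow> int" and r :: int
  assumes g: "\<gamma> > 2 * int CARD('n)" and vR: "v \<in> R_inf \<gamma>"
  defines "v' \<equiv> (\<lambda>p. if p \<in> cube r then v p else if p \<in> Zs r then 0 else \<gamma> - 1)"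
  shows "v' \<in> V_set \<gamma>"
proof (rule V_setI)
  note vD = R_infD[OF vR]
  have v'1: "v' p = \<gamma> - 1" if "p \<notin> cube r" "p \<notin> Zs r" for p using that unfolding v'_def by simp
  have v'0: "v' p = 0" if "p \<in> Zs r" for p using that Zs_not_cube[OF that] unfolding v'_def by simp
  have v'v: "v' p = v p" if "p \<in> cube r" for p using that unfolding v'_def by simp
  have v'le: "v' p \<le> \<gamma> - 1" for p unfolding v'_def using vD(2)[of p] g by auto
  show v'R: "v' \<in> R_inf \<gamma>"
  proof (rule R_infI)
    fix p show "0 \<le> v' p" unfolding v'_def using vD(1)[of p] g by auto
    show "v' p \<le> \<gamma> - 1" by (rule v'le)
  next
    fix F :: "('n \<Rightarrow> int) set" assume F: "finite F" "F \<noteq> {}"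
    show "\<exists>p\<in>F. int (card (F \<inter> Nb p)) \<le> v' p"
    proof (cases "\<exists>p\<in>F. p \<notin> cube r \<and> p \<notin> Zs r")
      case True
      then obtain p where p: "p \<in> F" "p \<notin> cube r" "p \<notin> Zs r" by blast
      have "int (card (F \<inter> Nb p)) \<le> 2 * int CARD('n)" by (rule card_le_Nb_int)
      then show ?thesis using p v'1[OF p(2,3)] g by force
    next
      case False
      note nF = False
      show ?thesis
      proof (cases "\<exists>p\<in>F. p \<in> Zs r")
        case True
        then obtain p where p: "p \<in> F" "p \<in> Zs r" by blast
        have "F \<inter> Nb p = {}" using Zs_nb[OF p(2)] nF by blast
        then have "int (card (F \<inter> Nb p)) \<le> v' p" using v'0[OF p(2)] by simp
        then show ?thesis using p(1) by blast
      next
        case False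
        with nF have "F \<subseteq> cube r" by blast
        from vD(3)[OF F] obtain p where "p \<in> F" "v p \<ge> int (card (F \<inter> Nb p))" by blast
        then show ?thesis using v'v \<open>F \<subseteq> cube r\<close> by force
      qed
    qed
  qed
  fix h assume hl: "h \<in> linf_int" and w0: "f_act \<gamma> h \<noteq> (\<lambda>_. 0)"
    and uR: "(\<lambda>p. v' p + f_act \<gamma> h p) \<in> R_inf \<gamma>"
  note uD = R_infD[OF uR]
  obtain pM where pM: "\<And>q. h q \<le> h pM" using linf_max[OF hl] by blast
  obtain pm where pm: "\<And>q. h pm \<le> h q" using linf_min[OF hl] by blast
  define M where "M = h pM"
  define m where "m = h pm"
  define S where "S = {q. h q = M}"
  define T where "T = {q. h q = m}"
  have pMS: "pM \<in> S" and pmT: "pm \<in> T" unfolding S_def T_def M_def m_def by auto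
  show False
  proof (cases "M > 0")
    case True
    have badS: "v' p < int (card (S \<inter> Nb p))" if "p \<in> S" for p
    proof -
      have "f_act \<gamma> h p \<ge> (\<gamma> - 2 * int CARD('n)) * M + (2 * int CARD('n) - int (card (S \<inter> Nb p)))"
        unfolding S_def by (rule argmax) (use pM that in \<open>auto simp: M_def S_def\<close>)
      moreover have "(\<gamma> - 2 * int CARD('n)) * M \<ge> (\<gamma> - 2 * int CARD('n)) * 1"
        by (rule mult_left_mono) (use True g in auto)
      ultimately show ?thesis using uD(2)[of p] by simp
    qed
    have nZ: "p \<notin> S" if "p \<notin> cube r" "p \<notin> Zs r" for p
    proof
      assume "p \<in> S"
      from badS[OF this] v'1[OF that] card_le_Nb_int[of S p] g show False by simp
    qed
    have "S \<subseteq> cube r"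
    proof
      fix p assume pS: "p \<in> S"
      show "p \<in> cube r"
      proof (rule ccontr)
        assume pc: "p \<notin> cube r"
        show False
        proof (cases "p \<in> Zs r")
          case False then show False using nZ pc pS by blast
        next
          case True
          have "S \<inter> Nb p = {}" using Zs_nb[OF True] nZ by blast
          then show False using badS[OF pS] v'0[OF True] by simp
        qed
      qed
    qed
    then have "finite S" using finite_box finite_subset by blast
    then show False using no_bad[OF v'R _ _ badS] pMS by blast
  next
    case False
    note M0 = False
    show False
    proof (cases "m < 0")
      case True
      have Tprop: "v' p \<ge> \<gamma> - int (card (T \<inter> Nb p)) \<and> v' p + f_act \<gamma> h p < int (card (T \<inter> Nb p))"
        if "p \<in> T" for p
      proof -
        have "f_act \<gamma> h p \<le> (\<gamma> - 2 * int CARD('n)) * m - (2 * int CARD('n) - int (card (T \<inter> Nb p)))"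
          unfolding T_def by (rule argmin) (use pm that in \<open>auto simp: m_def T_def\<close>)
        moreover have "(\<gamma> - 2 * int CARD('n)) * m \<le> (\<gamma> - 2 * int CARD('n)) * (-1)"
          by (rule mult_left_mono) (use True g in auto)
        ultimately show ?thesis using uD(1)[of p] v'le[of p] by simp
      qed
      have TZ: "p \<notin> T" if "p \<in> Zs r" for p
      proof
        assume "p \<in> T"
        from Tprop[OF this] v'0[OF that] card_le_Nb_int[of T p] g show False by simp
      qed
      have "T \<subseteq> cube (r + 2)"
      proof
        fix p assume pT: "p \<in> T"
        show "p \<in> cube (r + 2)"
        proof (rule ccontr)
          assume pc: "p \<notin> cube (r + 2)"
          then have pc': "p \<notin> cube r" using box_mono[of r "r + 2"] by auto
          have pZ: "p \<notin> Zs r" using TZ pT by blast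
          have ev: "even (\<Sum>i\<in>UNIV. p i)"
          proof (rule ccontr)
            assume "odd (\<Sum>i\<in>UNIV. p i)"
            moreover have "\<not> (\<forall>i. \<bar>p i\<bar> \<le> r + 2)" using pc unfolding cube_def by simp
            ultimately have "p \<in> Zs r" unfolding Zs_def by (auto simp: not_le intro: less_imp_le)
            with pZ show False by blast
          qed
          have "T \<inter> Nb p = {}" using far_nb[OF pc ev] TZ by blast
          then show False using Tprop[OF pT] v'1[OF pc' pZ] by simp
        qed
      qed
      then have "finite T" using finite_box finite_subset by blast
      then show False using no_bad[OF uR _ _] Tprop pmT by blast
    next
      case False
      then have "h q = 0" for q using pM[of q] pm[of q] M0 unfolding M_def m_def by simp
      then have "f_act \<gamma> h = (\<lambda>_. 0)" unfolding f_act_def by simp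
      with w0 show False by simp
    qed
  qed
qed

lemma design:
  fixes v :: "('n::finite \<Rightarrow> int) \<Rightarrow> int" and r :: int
  assumes card: "CARD('n) \<ge> 2" and g: "\<gamma> \<ge> 2 * int CARD('n)" and vR: "v \<in> R_inf \<gamma>"
  shows "\<exists>v'\<in>V_set \<gamma>. \<forall>p\<in>cube r. v' p = v p"
proof (cases "\<gamma> = 2 * int CARD('n)")
  case True
  show ?thesis by (rule bexI[OF _ design_E[OF card True vR, of r]]) auto
next
  case False
  with g have g2: "\<gamma> > 2 * int CARD('n)" by simp
  show ?thesis by (rule bexI[OF _ design_C[OF g2 vR, of r]]) auto
qed



lemma topspace_config: "topspace (config_top :: (('n \<Rightarrow> int) \<Rightarrow> int) topology) = UNIV"
  unfolding config_top_def by simp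

lemma topspace_sub: "topspace (subtopology config_top (R_inf \<gamma>) :: (('n \<Rightarrow> int) \<Rightarrow> int) topology) = R_inf \<gamma>"
  by (simp add: topspace_config)

lemma open_cyl: "finite J \<Longrightarrow> openin config_top {v'. \<forall>q\<in>J. v' q = v q}"
proof -
  assume J: "finite J"
  have eq: "{v'. \<forall>q\<in>J. v' q = v q} = PiE UNIV (\<lambda>q. if q \<in> J then {v q} else UNIV)"
    by (auto simp: PiE_iff split: if_splits)
  show ?thesis unfolding eq config_top_def
    by (rule product_topology_basis) (auto intro: finite_subset[OF _ J])
qed

lemma closure_part:
  fixes \<gamma> :: int
  assumes card: "CARD('n::finite) \<ge> 2" and g: "\<gamma> \<ge> 2 * int CARD('n)"
  shows "(subtopology config_top (R_inf \<gamma>)) closure_of (V_set \<gamma> :: (('n \<Rightarrow> int) \<Rightarrow> int) set) = R_inf \<gamma>"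
proof
  show "subtopology config_top (R_inf \<gamma>) closure_of V_set \<gamma> \<subseteq> R_inf \<gamma>"
    using closure_of_subset_topspace topspace_sub by metis
next
  show "R_inf \<gamma> \<subseteq> subtopology config_top (R_inf \<gamma>) closure_of (V_set \<gamma> :: (('n \<Rightarrow> int) \<Rightarrow> int) set)"
  proof
    fix v :: "('n \<Rightarrow> int) \<Rightarrow> int" assume vR: "v \<in> R_inf \<gamma>"
    show "v \<in> subtopology config_top (R_inf \<gamma>) closure_of V_set \<gamma>"
      unfolding in_closure_of
    proof (intro conjI allI impI)
      show "v \<in> topspace (subtopology config_top (R_inf \<gamma>))" using vR topspace_sub by metis
      fix T assume "v \<in> T \<and> openin (subtopology config_top (R_inf \<gamma>)) T"
      then obtain U where vT: "v \<in> T" and U: "openin config_top U" "T = U \<inter> R_inf \<gamma>"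
        by (auto simp: openin_subtopology)
      have "v \<in> U" using vT U by auto
      from product_topology_open_contains_basis[OF U(1)[unfolded config_top_def] this]
      obtain X where X: "v \<in> PiE UNIV X" "finite {i. X i \<noteq> topspace (discrete_topology UNIV)}"
        "PiE UNIV X \<subseteq> U" by blast
      have fin: "finite {i. X i \<noteq> UNIV}" using X(2) by simp
      obtain r where r: "{i. X i \<noteq> UNIV} \<subseteq> cube r" using finite_in_box[OF fin] by blast
      obtain v' where v': "v' \<in> V_set \<gamma>" "\<forall>p\<in>cube r. v' p = v p" using design[OF card g vR] by blast
      have "v' \<in> PiE UNIV X"
      proof -
        have "v' i \<in> X i" for i
        proof (cases "X i = UNIV")
          case False
          then have "i \<in> cube r" using r by blast
          then show ?thesis using v'(2) X(1) by (auto simp: PiE_iff)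
        qed simp
        then show ?thesis by (auto simp: PiE_iff)
      qed
      moreover have "v' \<in> R_inf \<gamma>" using v'(1) unfolding V_set_def by blast
      ultimately have "v' \<in> T" using X(3) U(2) by blast
      then show "\<exists>y. y \<in> V_set \<gamma> \<and> y \<in> T" using v'(1) by blast
    qed
  qed
qed

definition Dn :: "('n \<Rightarrow> int) \<Rightarrow> ('n \<Rightarrow> int) set" where
  "Dn q = insert q (Nb q)"

lemma finite_Dn: "finite (Dn (q::'n::finite \<Rightarrow> int))"
  unfolding Dn_def by (simp add: finite_Nb)

lemma f_agree:
  fixes h h' :: "('n::finite \<Rightarrow> int) \<Rightarrow> int"
  assumes "\<forall>r\<in>Dn q. h' r = h r"
  shows "f_act \<gamma> h' q = f_act \<gamma> h q"
proof -
  have "h' q = h q" using assms unfolding Dn_def by simp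
  moreover have "sum h' (Nb q) = sum h (Nb q)" by (rule sum.cong) (use assms in \<open>auto simp: Dn_def\<close>)
  ultimately show ?thesis unfolding f_act_Nb by simp
qed

lemma local_det:
  fixes v h :: "('n::finite \<Rightarrow> int) \<Rightarrow> int"
  assumes "\<not> (f_act \<gamma> h p \<noteq> 0 \<and> (\<lambda>q. v q + f_act \<gamma> h q) \<in> R_inf \<gamma>)"
  shows "\<exists>J. finite J \<and> (\<forall>v' h'. (\<forall>q\<in>J. v' q = v q \<and> h' q = h q) \<longrightarrow>
            \<not> (f_act \<gamma> h' p \<noteq> 0 \<and> (\<lambda>q. v' q + f_act \<gamma> h' q) \<in> R_inf \<gamma>))"
proof (cases "f_act \<gamma> h p = 0")
  case True
  show ?thesis
  proof (intro exI conjI allI impI)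
    show "finite (Dn p)" by (rule finite_Dn)
    fix v' h' :: "('n \<Rightarrow> int) \<Rightarrow> int" assume "\<forall>q\<in>Dn p. v' q = v q \<and> h' q = h q"
    then have "f_act \<gamma> h' p = f_act \<gamma> h p" by (intro f_agree) blast
    then show "\<not> (f_act \<gamma> h' p \<noteq> 0 \<and> (\<lambda>q. v' q + f_act \<gamma> h' q) \<in> R_inf \<gamma>)" using True by simp
  qed
next
  case False
  let ?u = "\<lambda>q. v q + f_act \<gamma> h q"
  have nu: "?u \<notin> R_inf \<gamma>" using assms False by blast
  show ?thesis
  proof (cases "\<forall>q. 0 \<le> ?u q \<and> ?u q \<le> \<gamma> - 1")
    case False
    then obtain q where q: "\<not> (0 \<le> ?u q \<and> ?u q \<le> \<gamma> - 1)" by blast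
    show ?thesis
    proof (intro exI conjI allI impI)
      show "finite (Dn q)" by (rule finite_Dn)
      fix v' h' :: "('n \<Rightarrow> int) \<Rightarrow> int" assume a: "\<forall>r\<in>Dn q. v' r = v r \<and> h' r = h r"
      then have "f_act \<gamma> h' q = f_act \<gamma> h q" by (intro f_agree) blast
      moreover have "v' q = v q" using a unfolding Dn_def by simp
      ultimately have "\<not> (0 \<le> v' q + f_act \<gamma> h' q \<and> v' q + f_act \<gamma> h' q \<le> \<gamma> - 1)" using q by simp
      then show "\<not> (f_act \<gamma> h' p \<noteq> 0 \<and> (\<lambda>q. v' q + f_act \<gamma> h' q) \<in> R_inf \<gamma>)"
        unfolding R_inf_def by blast
    qed
  next
    case True
    then obtain F where F: "finite F" "F \<noteq> {}" "\<forall>q\<in>F. ?u q < int (nbr_count F q)"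
      using nu unfolding R_inf_def by (auto simp: not_le)
    show ?thesis
    proof (intro exI conjI allI impI)
      show "finite (\<Union>q\<in>F. Dn q)" using F(1) finite_Dn by blast
      fix v' h' :: "('n \<Rightarrow> int) \<Rightarrow> int" assume a: "\<forall>r\<in>(\<Union>q\<in>F. Dn q). v' r = v r \<and> h' r = h r"
      have "v' q + f_act \<gamma> h' q = ?u q" if "q \<in> F" for q
      proof -
        have "f_act \<gamma> h' q = f_act \<gamma> h q" using a that by (intro f_agree) blast
        moreover have "v' q = v q" using a that unfolding Dn_def by blast
        ultimately show ?thesis by simp
      qed
      then have "\<forall>q\<in>F. v' q + f_act \<gamma> h' q < int (nbr_count F q)" using F(3) by simp
      note lt = this
      have "(\<lambda>q. v' q + f_act \<gamma> h' q) \<notin> R_inf \<gamma>"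
      proof
        assume "(\<lambda>q. v' q + f_act \<gamma> h' q) \<in> R_inf \<gamma>"
        then have "\<forall>G. finite G \<and> G \<noteq> {} \<longrightarrow> (\<exists>q\<in>G. v' q + f_act \<gamma> h' q \<ge> int (nbr_count G q))"
          unfolding R_inf_def by blast
        then obtain q where "q \<in> F" "v' q + f_act \<gamma> h' q \<ge> int (nbr_count F q)" using F(1,2) by blast
        with lt show False by fastforce
      qed
      then show "\<not> (f_act \<gamma> h' p \<noteq> 0 \<and> (\<lambda>q. v' q + f_act \<gamma> h' q) \<in> R_inf \<gamma>)" by blast
    qed
  qed
qed



definition Cset :: "int \<Rightarrow> nat \<Rightarrow> ('n::finite \<Rightarrow> int) \<Rightarrow> (('n \<Rightarrow> int) \<Rightarrow> int) set" where
  "Cset \<gamma> B p = {v \<in> R_inf \<gamma>. \<exists>h. (\<forall>q. \<bar>h q\<bar> \<le> int B) \<and> f_act \<gamma> h p \<noteq> 0 \<and> (\<lambda>q. v q + f_act \<gamma> h q) \<in> R_inf \<gamma>}"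

lemma compact_H: "compactin config_top {h :: ('n::finite \<Rightarrow> int) \<Rightarrow> int. \<forall>q. \<bar>h q\<bar> \<le> int B}"
proof -
  have eq: "{h :: ('n \<Rightarrow> int) \<Rightarrow> int. \<forall>q. \<bar>h q\<bar> \<le> int B} = PiE UNIV (\<lambda>_. {- int B..int B})"
    by (auto simp: PiE_iff abs_le_iff) (metis minus_le_iff)+
  show ?thesis unfolding eq config_top_def compactin_PiE
    by (auto intro: finite_imp_compactin)
qed

lemma open_part:
  fixes \<gamma> :: int and p :: "'n::finite \<Rightarrow> int"
  shows "openin (subtopology config_top (R_inf \<gamma>)) (R_inf \<gamma> - Cset \<gamma> B p)"
proof (subst openin_subopen, intro ballI)
  fix v assume v: "v \<in> R_inf \<gamma> - Cset \<gamma> B p"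
  define H where "H = {h :: ('n \<Rightarrow> int) \<Rightarrow> int. \<forall>q. \<bar>h q\<bar> \<le> int B}"
  have nw: "\<not> (f_act \<gamma> h p \<noteq> 0 \<and> (\<lambda>q. v q + f_act \<gamma> h q) \<in> R_inf \<gamma>)" if "h \<in> H" for h
    using v that unfolding Cset_def H_def by blast
  have "\<forall>h\<in>H. \<exists>J. finite J \<and> (\<forall>v' h'. (\<forall>q\<in>J. v' q = v q \<and> h' q = h q) \<longrightarrow>
            \<not> (f_act \<gamma> h' p \<noteq> 0 \<and> (\<lambda>q. v' q + f_act \<gamma> h' q) \<in> R_inf \<gamma>))"
    using local_det[OF nw] by blast
  from bchoice[OF this] obtain Jf where Jf0: "\<forall>h\<in>H. finite (Jf h) \<and> (\<forall>v' h'. (\<forall>q\<in>Jf h. v' q = v q \<and> h' q = h q) \<longrightarrow>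
            \<not> (f_act \<gamma> h' p \<noteq> 0 \<and> (\<lambda>q. v' q + f_act \<gamma> h' q) \<in> R_inf \<gamma>))"
    by (elim exE) (rule that)
  have Jf: "finite (Jf h) \<and> (\<forall>v' h'. (\<forall>q\<in>Jf h. v' q = v q \<and> h' q = h q) \<longrightarrow>
            \<not> (f_act \<gamma> h' p \<noteq> 0 \<and> (\<lambda>q. v' q + f_act \<gamma> h' q) \<in> R_inf \<gamma>))" if "h \<in> H" for h
    using Jf0 that by (rule bspec)
  define W where "W h = {h'. \<forall>q\<in>Jf h. h' q = h q}" for h
  have cH: "compactin config_top H" unfolding H_def by (rule compact_H)
  have "\<exists>\<F>. finite \<F> \<and> \<F> \<subseteq> W ` H \<and> H \<subseteq> \<Union>\<F>"
  proof -
    have "\<forall>U\<in>W ` H. openin config_top U" unfolding W_def using Jf open_cyl by blast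
    moreover have "H \<subseteq> \<Union>(W ` H)" unfolding W_def by blast
    ultimately show ?thesis using cH unfolding compactin_def by blast
  qed
  then obtain \<F> where F: "finite \<F>" "\<F> \<subseteq> W ` H" "H \<subseteq> \<Union>\<F>" by blast
  obtain H0 where H0: "H0 \<subseteq> H" "finite H0" "\<F> = W ` H0" using finite_subset_image[OF F(1,2)] by blast
  define J where "J = \<Union>(Jf ` H0)"
  have finJ: "finite J" unfolding J_def using H0 Jf by blast
  let ?T = "R_inf \<gamma> \<inter> {v'. \<forall>q\<in>J. v' q = v q}"
  show "\<exists>T. openin (subtopology config_top (R_inf \<gamma>)) T \<and> v \<in> T \<and> T \<subseteq> R_inf \<gamma> - Cset \<gamma> B p"
  proof (intro exI conjI)
    show "openin (subtopology config_top (R_inf \<gamma>)) ?T"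
      by (rule openin_subtopology_Int2[OF open_cyl[OF finJ]])
    show "v \<in> ?T" using v by blast
    show "?T \<subseteq> R_inf \<gamma> - Cset \<gamma> B p"
    proof
      fix v' assume v'T: "v' \<in> ?T"
      show "v' \<in> R_inf \<gamma> - Cset \<gamma> B p"
      proof
        show "v' \<in> R_inf \<gamma>" using v'T by blast
        show "v' \<notin> Cset \<gamma> B p"
        proof
          assume "v' \<in> Cset \<gamma> B p"
          then obtain h' where h': "h' \<in> H" "f_act \<gamma> h' p \<noteq> 0" "(\<lambda>q. v' q + f_act \<gamma> h' q) \<in> R_inf \<gamma>"
            unfolding Cset_def H_def by blast
          then obtain h0 where h0: "h0 \<in> H0" "h' \<in> W h0" using F(3) H0(3) by blast
          have "\<forall>q\<in>Jf h0. v' q = v q \<and> h' q = h0 q"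
            using h0 v'T unfolding W_def J_def by blast
          then show False using Jf[of h0] H0(1) h0(1) h'(2,3) by blast
        qed
      qed
    qed
  qed
qed

lemma V_eq:
  fixes \<gamma> :: int
  shows "(V_set \<gamma> :: (('n::finite \<Rightarrow> int) \<Rightarrow> int) set) = (\<Inter>i\<in>UNIV. R_inf \<gamma> - Cset \<gamma> (fst i) (snd i))"
proof
  show "(V_set \<gamma> :: (('n \<Rightarrow> int) \<Rightarrow> int) set) \<subseteq> (\<Inter>i\<in>UNIV. R_inf \<gamma> - Cset \<gamma> (fst i) (snd i))"
  proof
    fix v :: "('n \<Rightarrow> int) \<Rightarrow> int" assume v: "v \<in> V_set \<gamma>"
    have "v \<notin> Cset \<gamma> B p" for B p
    proof
      assume "v \<in> Cset \<gamma> B p"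
      then obtain h where h: "\<forall>q. \<bar>h q\<bar> \<le> int B" "f_act \<gamma> h p \<noteq> 0" "(\<lambda>q. v q + f_act \<gamma> h q) \<in> R_inf \<gamma>"
        unfolding Cset_def by blast
      have "h \<in> linf_int" unfolding linf_int_def using h(1) by blast
      moreover have "f_act \<gamma> h \<noteq> (\<lambda>_. 0)" using h(2) by auto
      ultimately show False using v h(3) unfolding V_set_def by blast
    qed
    moreover have "v \<in> R_inf \<gamma>" using v unfolding V_set_def by blast
    ultimately show "v \<in> (\<Inter>i\<in>UNIV. R_inf \<gamma> - Cset \<gamma> (fst i) (snd i))" by blast
  qed
next
  show "(\<Inter>i\<in>UNIV. R_inf \<gamma> - Cset \<gamma> (fst i) (snd i)) \<subseteq> (V_set \<gamma> :: (('n \<Rightarrow> int) \<Rightarrow> int) set)"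
  proof
    fix v :: "('n \<Rightarrow> int) \<Rightarrow> int" assume v: "v \<in> (\<Inter>i\<in>UNIV. R_inf \<gamma> - Cset \<gamma> (fst i) (snd i))"
    then have vR: "v \<in> R_inf \<gamma>" and nC: "\<And>B p. v \<notin> Cset \<gamma> B p" by auto
    show "v \<in> V_set \<gamma>"
    proof (rule V_setI[OF vR])
      fix h assume hl: "h \<in> linf_int" and w0: "f_act \<gamma> h \<noteq> (\<lambda>_. 0)"
        and uR: "(\<lambda>p. v p + f_act \<gamma> h p) \<in> R_inf \<gamma>"
      obtain B0 where B0: "\<forall>q. \<bar>h q\<bar> \<le> B0" using hl unfolding linf_int_def by blast
      have B: "\<forall>q. \<bar>h q\<bar> \<le> int (nat B0)" using B0 by (metis nat_0_le nat_le_eq_zle order_trans abs_ge_zero)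
      obtain p where p: "f_act \<gamma> h p \<noteq> 0" using w0 by auto
      have "v \<in> Cset \<gamma> (nat B0) p" unfolding Cset_def using vR B p uR by blast
      with nC show False by blast
    qed
  qed
qed

lemma gdelta_part:
  fixes \<gamma> :: int
  shows "gdelta_in (subtopology config_top (R_inf \<gamma>)) (V_set \<gamma> :: (('n::finite \<Rightarrow> int) \<Rightarrow> int) set)"
  unfolding gdelta_in_alt
proof
  show "V_set \<gamma> \<subseteq> topspace (subtopology config_top (R_inf \<gamma>))"
    unfolding topspace_sub V_set_def by blast
  show "(countable intersection_of openin (subtopology config_top (R_inf \<gamma>))) (V_set \<gamma> :: (('n \<Rightarrow> int) \<Rightarrow> int) set)"
    unfolding V_eq
    by (rule countable_intersection_of_INT) (auto intro: countable_intersection_of_inc open_part)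
qed


theorem proposition4p4:
  fixes \<gamma> :: int
  assumes "CARD('n::finite) \<ge> 2"
    and "\<gamma> \<ge> 2 * int CARD('n)"
  shows "gdelta_in (subtopology config_top (R_inf \<gamma>)) (V_set \<gamma> :: (('n \<Rightarrow> int) \<Rightarrow> int) set)
       \<and> (subtopology config_top (R_inf \<gamma>)) closure_of (V_set \<gamma> :: (('n \<Rightarrow> int) \<Rightarrow> int) set)
           = R_inf \<gamma>"
  using gdelta_part closure_part[OF assms] by blast

end
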